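(* Let $X$ be a Tychonoff space and let $x_0,y_0\in X$ be points that are not $P$-points of $X$. Then there exist a Tychonoff space $Y$ and an $\mathbb R$-quotient map $f\colon X\to Y$ such that $Y$ is a subset of $\mathbb R$ endowed with a topology finer than the one induced by the Euclidean metric, and $f(x_0)$ and $f(y_0)$ are not $P$-points of $Y$. Moreover, if $x_0\ne y_0$, then $f$ can be chosen so that $f(x_0)<f(y_0)$.
   Context: A point $x$ of a space is a $P$-point if every $G_\delta$-set containing $x$ is a neighborhood of $x$. A continuous surjection $p\colon X\to Y$ between topological spaces is $\mathbb R$-quotient if for every function $\varphi\colon Y\to\mathbb R$, $\varphi$ is continuous if and only if $\varphi\circ p$ is continuous; equivalently, the topology of $Y$ is the finest completely regular topology making $p$ continuous. *)

theory Defs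
  imports "HOL-Analysis.Analysis"
begin

definition tychonoff_space :: "'a topology \<Rightarrow> bool" where
  "tychonoff_space X \<longleftrightarrow> completely_regular_space X \<and> t1_space X"

definition p_point :: "'a topology \<Rightarrow> 'a \<Rightarrow> bool" where
  "p_point X x \<longleftrightarrow> x \<in> topspace X \<and>
     (\<forall>G. gdelta_in X G \<and> x \<in> G \<longrightarrow> (\<exists>U. openin X U \<and> x \<in> U \<and> U \<subseteq> G))"

definition real_quotient_map :: "'a topology \<Rightarrow> 'b topology \<Rightarrow> ('a \<Rightarrow> 'b) \<Rightarrow> bool" where
  "real_quotient_map X Y p \<longleftrightarrow> continuous_map X Y p \<and> p ` topspace X = topspace Y \<and>
     (\<forall>\<phi> :: 'b \<Rightarrow> real. continuous_map Y euclideanreal \<phi> \<longleftrightarrow>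
        continuous_map X euclideanreal (\<phi> \<circ> p))"

end

theory Submission imports Defs "HOL-Analysis.Function_Metric" begin


lemma nonP_fun:
  assumes cr: "completely_regular_space X" and x0: "x0 \<in> topspace X" and np: "\<not> p_point X x0"
  shows "\<exists>g. continuous_map X euclideanreal g \<and> (\<forall>x\<in>topspace X. 0 \<le> g x \<and> g x \<le> 1/2) \<and> g x0 = 0
     \<and> \<not>(\<exists>U. openin X U \<and> x0 \<in> U \<and> U \<subseteq> {x\<in>topspace X. g x = 0})"
proof -
  from np x0 obtain G where G: "gdelta_in X G" "x0 \<in> G"
    and nU: "\<not>(\<exists>U. openin X U \<and> x0 \<in> U \<and> U \<subseteq> G)" unfolding p_point_def by blast
  obtain C :: "nat \<Rightarrow> _" where C: "\<And>n. openin X (C n)" "\<Inter>(range C) = G" using G(1) unfolding gdelta_in_descending by blast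
  have "\<forall>n. \<exists>f. continuous_map X (top_of_set {0..1::real}) f \<and> f x0 = 0 \<and> f ` (topspace X - C n) \<subseteq> {1}"
  proof
    fix n
    have "closedin X (topspace X - C n)" using C(1) by blast
    moreover have "x0 \<in> topspace X - (topspace X - C n)" using x0 C G by blast
    ultimately show "\<exists>f. continuous_map X (top_of_set {0..1::real}) f \<and> f x0 = 0 \<and> f ` (topspace X - C n) \<subseteq> {1}"
      using cr unfolding completely_regular_space_def by blast
  qed
  then obtain f where f: "\<And>n. continuous_map X (top_of_set {0..1::real}) (f n)" "\<And>n. f n x0 = 0"
     "\<And>n. f n ` (topspace X - C n) \<subseteq> {1}" by metis
  define F where "F x = (\<lambda>n. f n x)" for x
  have fc: "continuous_map X euclideanreal (f n)" for n
    using f(1) continuous_map_in_subtopology by blast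
  have contF: "continuous_map X euclidean F"
    unfolding euclidean_product_topology[symmetric] continuous_map_componentwise_UNIV F_def
    using fc by simp
  have cd: "continuous_map euclidean euclideanreal (\<lambda>t::nat\<Rightarrow>real. dist t (\<lambda>_. 0))"
    by (simp add: continuous_on_dist continuous_on_id continuous_on_const)
  define g where "g x = min (dist (F x) (\<lambda>_. 0)) (1/2)" for x
  have "continuous_map X euclideanreal g"
    unfolding g_def
    by (intro continuous_map_real_min continuous_map_const[THEN iffD2] continuous_map_compose[OF contF cd, unfolded o_def]) auto
  moreover have "\<forall>x\<in>topspace X. 0 \<le> g x \<and> g x \<le> 1/2" by (simp add: g_def min_def)
  moreover have "F x0 = (\<lambda>_. 0)" by (simp add: F_def f(2) fun_eq_iff)
  then have "g x0 = 0" by (simp add: g_def)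
  moreover have "\<not>(\<exists>U. openin X U \<and> x0 \<in> U \<and> U \<subseteq> {x\<in>topspace X. g x = 0})"
  proof
    assume "\<exists>U. openin X U \<and> x0 \<in> U \<and> U \<subseteq> {x\<in>topspace X. g x = 0}"
    then obtain U where U: "openin X U" "x0 \<in> U" "U \<subseteq> {x\<in>topspace X. g x = 0}" by blast
    have "U \<subseteq> G"
    proof
      fix x assume "x \<in> U"
      then have x: "x \<in> topspace X" "g x = 0" using U by auto
      then have "F x = (\<lambda>_. 0)" by (simp add: g_def min_def split: if_splits)
      then have "f n x = 0" for n by (metis F_def)
      then have "x \<in> C n" for n using f(3)[of n] x(1) by force
      then show "x \<in> G" using C(2) by blast
    qed
    then show False using nU U by blast
  qed
  ultimately show ?thesis by blast
qed



lemma build_Y: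
  fixes h :: "'a \<Rightarrow> real"
  assumes hc: "continuous_map X euclideanreal h"
  shows "\<exists>Y. tychonoff_space Y \<and> real_quotient_map X Y h \<and>
           (\<forall>U. openin (subtopology euclideanreal (topspace Y)) U \<longrightarrow> openin Y U) \<and>
           (\<forall>x\<in>topspace X. p_point Y (h x) \<longrightarrow> openin X {x'\<in>topspace X. h x' = h x})"
proof -
  define S where "S = h ` topspace X"
  define \<Phi> where "\<Phi> = {\<phi>::real\<Rightarrow>real. continuous_map X euclideanreal (\<phi> \<circ> h)}"
  define e where "e y = (\<lambda>\<phi>\<in>\<Phi>. \<phi> y)" for y
  define P where "P = product_topology (\<lambda>_. euclideanreal) \<Phi>"
  define Y where "Y = pullback_topology S e P"
  have eP: "e y \<in> topspace P" for y by (simp add: P_def e_def)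
  have tY: "topspace Y = S" using eP by (auto simp: Y_def topspace_pullback_topology)
  have contphi: "continuous_map Y euclideanreal \<phi>" if "\<phi> \<in> \<Phi>" for \<phi>
  proof -
    have "continuous_map P euclideanreal (\<lambda>t. t \<phi>)"
      unfolding P_def using that by (rule continuous_map_product_projection)
    then have "continuous_map Y euclideanreal ((\<lambda>t. t \<phi>) \<circ> e)"
      unfolding Y_def by (rule continuous_map_pullback)
    then show ?thesis
      by (rule continuous_map_eq) (simp add: e_def that)
  qed
  have idP: "(\<lambda>x. x) \<in> \<Phi>" using hc by (simp add: \<Phi>_def o_def)
  have contH: "continuous_map X Y h"
    unfolding Y_def
  proof (rule continuous_map_pullback')
    show "continuous_map X P (e \<circ> h)"
      unfolding P_def continuous_map_componentwise
      by (auto simp: e_def \<Phi>_def o_def)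
    show "topspace X \<subseteq> h -` S" by (auto simp: S_def)
  qed
  have rq: "real_quotient_map X Y h"
    unfolding real_quotient_map_def
  proof (intro conjI allI)
    show "h ` topspace X = topspace Y" by (simp add: tY S_def)
    fix \<phi> :: "real \<Rightarrow> real"
    show "continuous_map Y euclideanreal \<phi> = continuous_map X euclideanreal (\<phi> \<circ> h)"
      using contphi[of \<phi>] continuous_map_compose[OF contH, of euclideanreal \<phi>]
      by (auto simp: \<Phi>_def)
  qed (rule contH)
  have finer: "openin Y U" if "openin (subtopology euclideanreal (topspace Y)) U" for U
  proof -
    have "\<exists>T. open T \<and> U = S \<inter> T" using that by (simp add: tY openin_open)
    then obtain T where T: "open T" "U = T \<inter> S" by blast
    have "openin Y {y \<in> topspace Y. y \<in> T}"
      using openin_continuous_map_preimage[OF contphi[OF idP], of T] T by simp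
    then show ?thesis using T tY by (simp add: Int_commute Collect_conj_eq Collect_mem_eq)
  qed
  have crP: "completely_regular_space P"
    unfolding P_def completely_regular_space_product_topology
    by (simp add: metrizable_imp_completely_regular_space metrizable_space_euclidean)
  have crY: "completely_regular_space Y"
    unfolding completely_regular_space_def
  proof (intro allI impI)
    fix C y assume a: "closedin Y C \<and> y \<in> topspace Y - C"
    then have "openin Y (S - C)" by (simp add: closedin_def tY)
    then obtain U where U: "openin P U" "S - C = e -` U \<inter> S"
      unfolding Y_def openin_pullback_topology by blast
    have "closedin P (topspace P - U)" using U(1) by blast
    moreover have "e y \<in> topspace P - (topspace P - U)" using a U eP tY by blast
    ultimately obtain f where f: "continuous_map P (top_of_set {0..1::real}) f" "f (e y) = 0"
        "f ` (topspace P - U) \<subseteq> {1}"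
      using crP unfolding completely_regular_space_def by blast
    have "continuous_map Y (top_of_set {0..1::real}) (f \<circ> e)"
      unfolding Y_def using f(1) by (rule continuous_map_pullback)
    moreover have "(f \<circ> e) ` C \<subseteq> {1}"
    proof
      fix z assume "z \<in> (f \<circ> e) ` C"
      then obtain c where c: "c \<in> C" "z = f (e c)" by auto
      have "c \<in> S" using a c closedin_subset tY by blast
      then have "e c \<notin> U" using U c by blast
      then show "z \<in> {1}" using f(3) eP c by blast
    qed
    ultimately show "\<exists>f. continuous_map Y (top_of_set {0..1::real}) f \<and> f y = 0 \<and> f ` C \<subseteq> {1}"
      using f(2) by (metis comp_apply)
  qed
  have t1: "t1_space Y"
    unfolding t1_space_def
  proof (intro ballI impI)
    fix x y assume xy: "x \<in> topspace Y" "y \<in> topspace Y" "x \<noteq> y"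
    have "openin (subtopology euclideanreal (topspace Y)) (topspace Y - {y})"
      by (simp add: openin_open) (metis Diff_eq Int_commute open_Compl closed_singleton open_Int Compl_eq_Diff_UNIV)
    then show "\<exists>U. openin Y U \<and> x \<in> U \<and> y \<notin> U" using finer xy by blast
  qed
  have np: "openin X {x'\<in>topspace X. h x' = h x}" if x: "x \<in> topspace X" and pp: "p_point Y (h x)" for x
  proof -
    define B where "B n = S \<inter> ball (h x) (inverse (Suc n))" for n :: nat
    have Bo: "openin Y (B n)" for n
      using finer[of "B n"] unfolding B_def tY openin_open by blast
    have "\<Inter>(range B) = {h x}"
    proof
      show "{h x} \<subseteq> \<Inter>(range B)" using x by (auto simp: B_def S_def)
      show "\<Inter>(range B) \<subseteq> {h x}"
      proof
        fix z assume "z \<in> \<Inter>(range B)"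
        then have "dist (h x) z < inverse (Suc n)" for n by (auto simp: B_def)
        then have dz: "dist (h x) z < inverse (real (Suc n))" for n by simp
        have "dist (h x) z = 0"
        proof (rule ccontr)
          assume "dist (h x) z \<noteq> 0"
          then have "0 < dist (h x) z" by simp
          then obtain n where "inverse (real (Suc n)) < dist (h x) z" using reals_Archimedean by blast
          then show False using dz[of n] by simp
        qed
        then show "z \<in> {h x}" by simp
      qed
    qed
    moreover have "gdelta_in Y (\<Inter>(range B))"
      by (intro gdelta_in_Inter) (auto intro: open_imp_gdelta_in Bo)
    ultimately have "gdelta_in Y {h x}" by simp
    then obtain U where U: "openin Y U" "h x \<in> U" "U \<subseteq> {h x}" using pp unfolding p_point_def by blast
    then have "U = {h x}" by blast
    then have "openin X {x' \<in> topspace X. h x' \<in> {h x}}"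
      using openin_continuous_map_preimage[OF contH U(1)] by simp
    then show ?thesis by simp
  qed
  show ?thesis
    using crY t1 rq finer np unfolding tychonoff_space_def by blast
qed


theorem proposition2:
  fixes X :: "'a topology" and x0 y0 :: 'a
  assumes "tychonoff_space X"
    and "x0 \<in> topspace X" and "\<not> p_point X x0"
    and "y0 \<in> topspace X" and "\<not> p_point X y0"
  shows "\<exists>(Y :: real topology) f.
           tychonoff_space Y \<and> real_quotient_map X Y f \<and>
           (\<forall>U. openin (subtopology euclideanreal (topspace Y)) U \<longrightarrow> openin Y U) \<and>
           \<not> p_point Y (f x0) \<and> \<not> p_point Y (f y0) \<and>
           (x0 \<noteq> y0 \<longrightarrow> f x0 < f y0)"
proof -
  have cr: "completely_regular_space X" and t1: "t1_space X"
    using assms(1) unfolding tychonoff_space_def by auto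
  obtain g where g: "continuous_map X euclideanreal g" "\<forall>x\<in>topspace X. 0 \<le> g x \<and> g x \<le> 1/2" "g x0 = 0"
     "\<not>(\<exists>U. openin X U \<and> x0 \<in> U \<and> U \<subseteq> {x\<in>topspace X. g x = 0})"
    using nonP_fun[OF cr assms(2,3)] by blast
  obtain k where k: "continuous_map X euclideanreal k" "\<forall>x\<in>topspace X. 0 \<le> k x \<and> k x \<le> 1/2" "k y0 = 0"
     "\<not>(\<exists>U. openin X U \<and> y0 \<in> U \<and> U \<subseteq> {x\<in>topspace X. k x = 0})"
    using nonP_fun[OF cr assms(4,5)] by blast
  show ?thesis
  proof (cases "x0 = y0")
    case True
    obtain Y where Y: "tychonoff_space Y" "real_quotient_map X Y g"
       "\<forall>U. openin (subtopology euclideanreal (topspace Y)) U \<longrightarrow> openin Y U"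
       "\<forall>x\<in>topspace X. p_point Y (g x) \<longrightarrow> openin X {x'\<in>topspace X. g x' = g x}"
      using build_Y[OF g(1)] by blast
    have "\<not> p_point Y (g x0)"
    proof
      assume "p_point Y (g x0)"
      then have "openin X {x'\<in>topspace X. g x' = g x0}" using Y(4) assms(2) by blast
      moreover have "x0 \<in> {x'\<in>topspace X. g x' = g x0}" using assms(2) by simp
      moreover have "{x'\<in>topspace X. g x' = g x0} \<subseteq> {x\<in>topspace X. g x = 0}" using g(3) by simp
      ultimately show False using g(4) by blast
    qed
    then show ?thesis
      apply (intro exI[of _ Y] exI[of _ g])
      using Y True by simp
  next
    case False
    have "closedin X {y0}" using t1 assms(4) by (rule closedin_t1_singleton)
    moreover have "x0 \<in> topspace X - {y0}" using False assms(2) by blast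
    ultimately obtain u where u: "continuous_map X (top_of_set {0..1::real}) u" "u x0 = 0" "u ` {y0} \<subseteq> {1}"
      using cr unfolding completely_regular_space_def by blast
    have uc: "continuous_map X euclideanreal u" using u(1) continuous_map_in_subtopology by blast
    have ub: "0 \<le> u x \<and> u x \<le> 1" if "x \<in> topspace X" for x
      using u(1) that by (auto simp: continuous_map_in_subtopology image_subset_iff)
    have uy: "u y0 = 1" using u(3) by simp
    define h where "h x = (1 - u x) * g x + u x * (1 - k x)" for x
    have hc: "continuous_map X euclideanreal h"
      unfolding h_def using g(1) k(1) uc by (intro continuous_intros) auto
    have h0: "h x0 = 0" by (simp add: h_def g(3) u(2))
    have h1: "h y0 = 1" by (simp add: h_def k(3) uy)
    have lev0: "g x = 0" if "x \<in> topspace X" "h x = 0" for x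
    proof -
      have a: "0 \<le> (1 - u x) * g x" "0 \<le> u x * (1 - k x)"
        using ub[OF that(1)] g(2) k(2) that(1) by auto
      then have b: "(1 - u x) * g x = 0" "u x * (1 - k x) = 0" using that(2) unfolding h_def by linarith+
      have "1 - k x \<noteq> 0" using k(2) that(1) by auto
      then have "u x = 0" using b(2) by simp
      then show ?thesis using b(1) by simp
    qed
    have lev1: "k x = 0" if "x \<in> topspace X" "h x = 1" for x
    proof -
      have e: "1 - h x = (1 - u x) * (1 - g x) + u x * k x" by (simp add: h_def algebra_simps)
      have a: "0 \<le> (1 - u x) * (1 - g x)" "0 \<le> u x * k x"
        using ub[OF that(1)] g(2) k(2) that(1) by auto
      then have b: "(1 - u x) * (1 - g x) = 0" "u x * k x = 0" using that(2) e by linarith+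
      have "1 - g x \<noteq> 0" using g(2) that(1) by auto
      then have "u x = 1" using b(1) by simp
      then show ?thesis using b(2) by simp
    qed
    obtain Y where Y: "tychonoff_space Y" "real_quotient_map X Y h"
       "\<forall>U. openin (subtopology euclideanreal (topspace Y)) U \<longrightarrow> openin Y U"
       "\<forall>x\<in>topspace X. p_point Y (h x) \<longrightarrow> openin X {x'\<in>topspace X. h x' = h x}"
      using build_Y[OF hc] by blast
    have n0: "\<not> p_point Y (h x0)"
    proof
      assume "p_point Y (h x0)"
      then have o: "openin X {x'\<in>topspace X. h x' = h x0}" using Y(4) assms(2) by blast
      have "{x'\<in>topspace X. h x' = h x0} \<subseteq> {x\<in>topspace X. g x = 0}" using lev0 h0 by auto
      then show False using g(4) o assms(2) by blast
    qed
    have n1: "\<not> p_point Y (h y0)"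
    proof
      assume "p_point Y (h y0)"
      then have o: "openin X {x'\<in>topspace X. h x' = h y0}" using Y(4) assms(4) by blast
      have "{x'\<in>topspace X. h x' = h y0} \<subseteq> {x\<in>topspace X. k x = 0}" using lev1 h1 by auto
      then show False using k(4) o assms(4) by blast
    qed
    show ?thesis using Y n0 n1 h0 h1 by (intro exI[of _ Y] exI[of _ h]) auto
  qed
qed

end
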